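(* Let $s\ge 1$ and $n_0,\dots,n_s,r$ be positive integers. If there exist integers $t\ge r$ and $l_0,\dots,l_s$ with $0\le l_i\le t$ for all $i$ and $\sum_{i=0}^s l_i=t$, such that $$\sum_{i=0}^s 2^t e^{-\frac{(t-l_i)_r}{(t)_r}n_i}\le 1,$$ then $ch(K_{n_0,\dots,n_s})>r$.
   Context: For an integer $a$ and a positive integer $r$, $(a)_r=a(a-1)\cdots(a-r+1)$ denotes the falling factorial. For a graph $G=(V,E)$, the choice number $ch(G)$ is the minimum integer $k$ such that for every assignment of a list $S(v)$ of at least $k$ colors to each vertex $v\in V$, there is a proper vertex coloring of $G$ assigning to each vertex $v$ a color from $S(v)$. $K_{n_0,\dots,n_s}$ denotes the complete $(s+1)$-partite graph with parts of sizes $n_0,\dots,n_s$. *)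

theory Defs
  imports Complex_Main
begin

definition falling_fact :: "int \<Rightarrow> nat \<Rightarrow> real" where
  "falling_fact a r = (\<Prod>k<r. real_of_int (a - int k))"

definition proper_coloring :: "'a set \<Rightarrow> ('a \<Rightarrow> 'a \<Rightarrow> bool) \<Rightarrow> ('a \<Rightarrow> nat) \<Rightarrow> bool" where
  "proper_coloring V E c = (\<forall>u\<in>V. \<forall>v\<in>V. E u v \<longrightarrow> c u \<noteq> c v)"

definition choosable :: "'a set \<Rightarrow> ('a \<Rightarrow> 'a \<Rightarrow> bool) \<Rightarrow> nat \<Rightarrow> bool" where
  "choosable V E k = (\<forall>S :: 'a \<Rightarrow> nat set.
      (\<forall>v\<in>V. finite (S v) \<and> k \<le> card (S v)) \<longrightarrow>
      (\<exists>c. (\<forall>v\<in>V. c v \<in> S v) \<and> proper_coloring V E c))"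

definition choice_number :: "'a set \<Rightarrow> ('a \<Rightarrow> 'a \<Rightarrow> bool) \<Rightarrow> nat" where
  "choice_number V E = (LEAST k. choosable V E k)"

text \<open>Complete (s+1)-partite graph K_{n_0,...,n_s}: vertex (i,j) is the j-th vertex
  of part i (i \<le> s, j < n i); two vertices are adjacent iff they lie in different parts.\<close>
definition cmp_vertices :: "nat \<Rightarrow> (nat \<Rightarrow> nat) \<Rightarrow> (nat \<times> nat) set" where
  "cmp_vertices s n = {(i, j). i \<le> s \<and> j < n i}"

definition cmp_edge :: "nat \<times> nat \<Rightarrow> nat \<times> nat \<Rightarrow> bool" where
  "cmp_edge u v = (fst u \<noteq> fst v)"

end

theory Submission imports Defs "HOL-Library.FuncSet" begin

lemma ff_nat: "falling_fact (int m) r = fact r * real (m choose r)"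
proof (induction r)
  case 0 show ?case by (simp add: falling_fact_def)
next
  case (Suc r)
  have e: "falling_fact (int m) (Suc r) = falling_fact (int m) r * (real m - real r)"
    by (simp add: falling_fact_def)
  have key: "Suc r * (m choose Suc r) = (m - r) * (m choose r)"
    using binomial_absorption binomial_absorb_comp by metis
  then have key': "real (Suc r) * real (m choose Suc r) = real (m - r) * real (m choose r)"
    by (metis of_nat_mult)
  show ?case
  proof (cases "r \<le> m")
    case True
    then have "real (m - r) = real m - real r" by simp
    have "fact (Suc r) * real (m choose Suc r) = fact r * (real (Suc r) * real (m choose Suc r))"
      by (simp add: fact_Suc algebra_simps)
    also have "\<dots> = fact r * ((real m - real r) * real (m choose r))"
      using key' True by (simp add: of_nat_diff)
    also have "\<dots> = fact r * real (m choose r) * (real m - real r)"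
      by (simp add: mult_ac)
    finally show ?thesis using e Suc by simp
  next
    case False
    then show ?thesis using e Suc by (simp add: binomial_eq_0)
  qed
qed

lemma inj_choice:
  assumes "finite V"
  shows "(\<forall>v\<in>V. finite (S v) \<and> card V \<le> card (S v)) \<Longrightarrow> \<exists>c. (\<forall>v\<in>V. c v \<in> S v) \<and> inj_on c V"
  using assms
proof (induction V rule: finite_induct)
  case empty then show ?case by auto
next
  case (insert x F)
  have "\<forall>v\<in>F. finite (S v) \<and> card F \<le> card (S v)"
    using insert by auto
  then obtain c where c: "\<forall>v\<in>F. c v \<in> S v" "inj_on c F" using insert by blast
  have "card (c ` F) < card (S x)"
    using insert card_image_le[of F c] by auto
  then have "\<not> S x \<subseteq> c ` F" using insert by (meson card_mono finite_imageI not_le)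
  then obtain y where y: "y \<in> S x" "y \<notin> c ` F" by blast
  show ?case
    apply (rule exI[of _ "c(x := y)"])
    using c y insert by (auto simp: inj_on_def)
qed

lemma choosable_mono: "choosable V E k \<Longrightarrow> k \<le> k' \<Longrightarrow> choosable V E k'"
  unfolding choosable_def by (meson order_trans)

lemma choosable_card: "finite V \<Longrightarrow> \<forall>v. \<not> E v v \<Longrightarrow> choosable V E (card V)"
  unfolding choosable_def proper_coloring_def
proof (intro allI impI)
  fix S :: "'a \<Rightarrow> nat set"
  assume "finite V" "\<forall>v. \<not> E v v" "\<forall>v\<in>V. finite (S v) \<and> card V \<le> card (S v)"
  then obtain c where c: "\<forall>v\<in>V. c v \<in> S v" "inj_on c V" using inj_choice by blast
  show "\<exists>c. (\<forall>v\<in>V. c v \<in> S v) \<and> (\<forall>u\<in>V. \<forall>v\<in>V. E u v \<longrightarrow> c u \<noteq> c v)"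
    apply (rule exI[of _ c]) using c \<open>\<forall>v. \<not> E v v\<close> by (metis inj_on_contraD)
qed

theorem lemma6p1:
  fixes s r :: nat and n :: "nat \<Rightarrow> nat"
  assumes "s \<ge> 1" and "\<forall>i\<le>s. n i > 0" and "r > 0"
    and "\<exists>(t::int) (l::nat \<Rightarrow> int). t \<ge> int r \<and> (\<forall>i\<le>s. 0 \<le> l i \<and> l i \<le> t) \<and>
          (\<Sum>i=0..s. l i) = t \<and>
          (\<Sum>i=0..s. 2 ^ nat t * exp (- (falling_fact (t - l i) r / falling_fact t r) * real (n i))) \<le> 1"
  shows "choice_number (cmp_vertices s n) cmp_edge > r"
proof -
  obtain t l where tl: "t \<ge> int r" "\<forall>i\<le>s. 0 \<le> l i \<and> l i \<le> t" "(\<Sum>i=0..s. l i) = t"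
    "(\<Sum>i=0..s. 2 ^ nat t * exp (- (falling_fact (t - l i) r / falling_fact t r) * real (n i))) \<le> 1"
    using assms(4) by blast
  define T where "T = nat t"
  define L where "L = (\<lambda>i. nat (l i))"
  have tT: "t = int T" using tl(1) T_def by simp
  have lL: "\<And>i. i \<le> s \<Longrightarrow> l i = int (L i)" using tl(2) L_def by simp
  have LT: "\<And>i. i \<le> s \<Longrightarrow> L i \<le> T" using tl(2) lL tT by force
  have sumL: "(\<Sum>i=0..s. L i) = T"
  proof -
    have "int (\<Sum>i=0..s. L i) = (\<Sum>i=0..s. int (L i))" by (simp add: of_nat_sum)
    also have "\<dots> = (\<Sum>i=0..s. l i)" by (rule sum.cong) (auto simp: lL)
    finally have "int (\<Sum>i=0..s. L i) = int T" using tl(3) tT by simp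
    then show ?thesis by (simp only: of_nat_eq_iff)
  qed
  have rT: "r \<le> T" using tl(1) tT by simp
  define V where "V = cmp_vertices s n"
  have V_eq: "V = Sigma {..s} (\<lambda>i. {..<n i})" by (auto simp: V_def cmp_vertices_def)
  have finV: "finite V" by (simp add: V_eq)
  have part: "\<And>i. i \<le> s \<Longrightarrow> V \<inter> {v. fst v = i} = Pair i ` {..<n i}"
    by (auto simp: V_eq)
  have cardpart: "\<And>i. i \<le> s \<Longrightarrow> card (V \<inter> {v. fst v = i}) = n i"
    by (simp add: part card_image inj_on_def)
  have notch: "\<not> choosable V cmp_edge r"
  proof
    assume ch: "choosable V cmp_edge r"
    define U where "U = {..<T}"
    define R where "R = {X. X \<subseteq> U \<and> card X = r}"
    define Om where "Om = PiE V (\<lambda>_. R)"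
    define AA where "AA = (\<lambda>i::nat. {A. A \<subseteq> U \<and> card A \<le> L i})"
    define B where "B = (\<lambda>i A. {S\<in>Om. \<forall>v\<in>V. fst v = i \<longrightarrow> S v \<inter> A \<noteq> {}})"
    have finR: "finite R" unfolding R_def U_def by (rule finite_subset[of _ "Pow {..<T}"]) auto
    have cardR: "card R = T choose r" unfolding R_def U_def using n_subsets[of "{..<T}" r] by simp
    have cRpos: "T choose r > 0" using rT by simp
    have finOm: "finite Om" unfolding Om_def using finV finR by (intro finite_PiE) auto
    have cardOm: "card Om = card R ^ card V" unfolding Om_def by (simp add: card_PiE[OF finV])
    have finAA: "finite (AA i)" for i unfolding AA_def U_def by (rule finite_subset[of _ "Pow {..<T}"]) auto
    have cover: "Om \<subseteq> (\<Union>i\<in>{0..s}. \<Union>A\<in>AA i. B i A)"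
    proof
      fix S assume S: "S \<in> Om"
      have SR: "\<forall>v\<in>V. S v \<in> R" using S unfolding Om_def by auto
      have "\<forall>v\<in>V. finite (S v) \<and> r \<le> card (S v)"
        using SR unfolding R_def U_def by (auto intro: finite_subset)
      then obtain c where c: "\<forall>v\<in>V. c v \<in> S v" "proper_coloring V cmp_edge c"
        using ch unfolding choosable_def by blast
      define Ai where "Ai = (\<lambda>i. c ` (V \<inter> {v. fst v = i}))"
      have AiU: "Ai i \<subseteq> U" for i using c(1) SR unfolding Ai_def R_def by auto
      have finAi: "finite (Ai i)" for i using AiU unfolding U_def by (meson finite_lessThan finite_subset)
      have disj: "\<forall>i\<in>{0..s}. \<forall>j\<in>{0..s}. i \<noteq> j \<longrightarrow> Ai i \<inter> Ai j = {}"
        using c(2) unfolding Ai_def proper_coloring_def cmp_edge_def by fastforce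
      have "\<exists>i\<in>{0..s}. card (Ai i) \<le> L i"
      proof (rule ccontr)
        assume "\<not> ?thesis"
        then have "\<And>i. i \<in> {0..s} \<Longrightarrow> Suc (L i) \<le> card (Ai i)" by (meson not_less_eq_eq)
        then have "(\<Sum>i=0..s. Suc (L i)) \<le> (\<Sum>i=0..s. card (Ai i))" by (rule sum_mono)
        also have "\<dots> = card (\<Union>i\<in>{0..s}. Ai i)" using card_UN_disjoint[of "{0..s}" Ai] finAi disj by simp
        also have "\<dots> \<le> card U" using AiU by (intro card_mono) (auto simp: U_def)
        also have "\<dots> = T" by (simp add: U_def)
        finally have "(\<Sum>i=0..s. Suc (L i)) \<le> T" .
        moreover have "(\<Sum>i=0..s. Suc (L i)) = T + Suc s" using sumL by (simp add: sum_Suc)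
        ultimately show False by simp
      qed
      then obtain i where i: "i \<in> {0..s}" "card (Ai i) \<le> L i" by blast
      have "Ai i \<in> AA i" using i AiU unfolding AA_def by auto
      moreover have "S \<in> B i (Ai i)" using S c(1) unfolding B_def Ai_def by auto
      ultimately show "S \<in> (\<Union>i\<in>{0..s}. \<Union>A\<in>AA i. B i A)" using i by blast
    qed
    have le1: "card Om \<le> (\<Sum>i=0..s. \<Sum>A\<in>AA i. card (B i A))"
    proof -
      have "(\<Union>i\<in>{0..s}. \<Union>A\<in>AA i. B i A) \<subseteq> Om" by (auto simp: B_def)
      then have "card Om \<le> card (\<Union>i\<in>{0..s}. \<Union>A\<in>AA i. B i A)"
        using cover finOm by (intro card_mono) (auto intro: finite_subset)
      also have "\<dots> \<le> (\<Sum>i=0..s. card (\<Union>A\<in>AA i. B i A))" by (rule card_UN_le) simp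
      also have "\<dots> \<le> (\<Sum>i=0..s. \<Sum>A\<in>AA i. card (B i A))" by (intro sum_mono card_UN_le finAA)
      finally show ?thesis .
    qed
    define cR where "cR = real (T choose r)"
    define q where "q = (\<lambda>i. real ((T - L i) choose r) / cR)"
    have cRpos': "cR > 0" using cRpos cR_def by simp
    have qeq: "falling_fact (t - l i) r / falling_fact t r = q i" if i: "i \<le> s" for i
    proof -
      have "t - l i = int (T - L i)" using i LT lL tT by simp
      then show ?thesis using tT by (simp add: ff_nat q_def cR_def)
    qed
    have q01: "0 \<le> 1 - q i" for i
    proof -
      have "(T - L i) choose r \<le> T choose r" by (rule binomial_right_mono) simp
      then show ?thesis using cRpos' by (simp add: q_def cR_def divide_le_eq_1)
    qed
    have Bbound: "real (card (B i A)) \<le> exp (- q i * real (n i)) * real (card Om)"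
      if i: "i \<le> s" and A: "A \<in> AA i" for i A
    proof -
      define RA where "RA = {X\<in>R. X \<inter> A \<noteq> {}}"
      define R0 where "R0 = {X. X \<subseteq> U - A \<and> card X = r}"
      have AU: "A \<subseteq> U" "card A \<le> L i" using A by (auto simp: AA_def)
      have finA: "finite A" using AU(1) unfolding U_def by (meson finite_lessThan finite_subset)
      have RA_eq: "RA = R - R0" by (auto simp: RA_def R0_def R_def)
      have R0R: "R0 \<subseteq> R" by (auto simp: R0_def R_def)
      have "card (U - A) = T - card A" using AU finA by (simp add: card_Diff_subset U_def)
      then have cardR0: "card R0 = (T - card A) choose r" unfolding R0_def
        using n_subsets[of "U - A" r] by (simp add: U_def)
      have "(T - L i) choose r \<le> card R0" unfolding cardR0 by (rule binomial_right_mono) (use AU in simp)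
      moreover have "card RA = card R - card R0" using RA_eq R0R finR by (simp add: card_Diff_subset finite_subset)
      moreover have "card R0 \<le> card R" using R0R finR by (simp add: card_mono)
      ultimately have "real (card RA) \<le> cR - real ((T - L i) choose r)"
        using cardR cR_def by (simp add: of_nat_diff)
      also have "\<dots> = cR * (1 - q i)" using cRpos' by (simp add: q_def field_simps)
      finally have RA_le: "real (card RA) \<le> cR * (1 - q i)" .
      have BPi: "B i A = PiE V (\<lambda>v. if fst v = i then RA else R)"
        unfolding B_def Om_def RA_def PiE_def Pi_def by auto
      define X where "X = card R ^ card (V \<inter> - {v. fst v = i})"
      have cB: "card (B i A) = card RA ^ n i * X"
        unfolding BPi card_PiE[OF finV] X_def
        by (simp add: prod.If_cases[OF finV] cardpart[OF i] if_distrib del: if_image_distrib)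
      have cO: "card Om = card R ^ n i * X"
      proof -
        have "card Om = (\<Prod>v\<in>V. if fst v = i then card R else card R)" unfolding Om_def card_PiE[OF finV] by simp
        also have "\<dots> = card R ^ n i * X"
          unfolding X_def by (simp only: prod.If_cases[OF finV] prod_constant cardpart[OF i])
        finally show ?thesis .
      qed
      have "real (card (B i A)) = real (card RA) ^ n i * real X" by (simp add: cB)
      also have "\<dots> \<le> (cR * (1 - q i)) ^ n i * real X"
        by (intro mult_right_mono power_mono RA_le) auto
      also have "\<dots> = (1 - q i) ^ n i * real (card Om)" by (simp add: cO cR_def cardR power_mult_distrib)
      also have "\<dots> \<le> exp (- q i * real (n i)) * real (card Om)"
      proof (intro mult_right_mono)
        have "(1 - q i) ^ n i \<le> exp (- q i) ^ n i"
          using exp_ge_add_one_self[of "- q i"] q01[of i] by (intro power_mono) auto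
        also have "\<dots> = exp (- q i * real (n i))" by (simp add: exp_of_nat_mult[symmetric] mult.commute)
        finally show "(1 - q i) ^ n i \<le> exp (- q i * real (n i))" .
      qed auto
      finally show ?thesis .
    qed
    have sumA: "real (\<Sum>A\<in>AA i. card (B i A)) \<le> (2^T - 1) * (exp (- q i * real (n i)) * real (card Om))"
      if i: "i \<le> s" for i
    proof -
      have v0: "(i, 0) \<in> V" using assms(2) i by (simp add: V_eq)
      have Be: "B i {} = {}" using v0 unfolding B_def by force
      have eAA: "{} \<in> AA i" by (simp add: AA_def)
      have "card (AA i) \<le> 2 ^ T"
      proof -
        have "AA i \<subseteq> Pow U" by (auto simp: AA_def)
        then have "card (AA i) \<le> card (Pow U)" by (intro card_mono) (auto simp: U_def)
        then show ?thesis by (simp add: card_Pow U_def)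
      qed
      then have c2: "real (card (AA i)) \<le> 2^T"
        by (metis of_nat_le_iff of_nat_numeral of_nat_power)
      have c1: "1 \<le> card (AA i)" using eAA finAA[of i]
        by (metis One_nat_def Suc_leI card_gt_0_iff empty_iff)
      have "real (card (AA i - {{}})) = real (card (AA i)) - 1"
        using c1 eAA finAA[of i] by (simp add: of_nat_diff)
      then have cA: "real (card (AA i - {{}})) \<le> 2^T - 1" using c2 by simp
      have "real (\<Sum>A\<in>AA i. card (B i A)) = (\<Sum>A\<in>AA i - {{}}. real (card (B i A)))"
        using sum.remove[OF finAA eAA, of "\<lambda>A. real (card (B i A))"] Be by (simp add: of_nat_sum)
      also have "\<dots> \<le> real (card (AA i - {{}})) * (exp (- q i * real (n i)) * real (card Om))"
        by (rule sum_bounded_above) (use Bbound i in auto)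
      also have "\<dots> \<le> (2^T - 1) * (exp (- q i * real (n i)) * real (card Om))"
        by (intro mult_right_mono cA) auto
      finally show ?thesis .
    qed
    have Ompos: "real (card Om) > 0" using cardOm cardR cRpos by simp
    have "real (card Om) \<le> (\<Sum>i=0..s. real (\<Sum>A\<in>AA i. card (B i A)))"
      using le1 by (metis of_nat_le_iff of_nat_sum)
    also have "\<dots> \<le> (\<Sum>i=0..s. (2^T - 1) * (exp (- q i * real (n i)) * real (card Om)))"
      by (rule sum_mono) (use sumA in auto)
    also have "\<dots> < (\<Sum>i=0..s. 2^T * (exp (- q i * real (n i)) * real (card Om)))"
      by (rule sum_strict_mono) (use Ompos in \<open>auto simp: algebra_simps\<close>)
    also have "\<dots> = (\<Sum>i=0..s. 2 ^ nat t * exp (- (falling_fact (t - l i) r / falling_fact t r) * real (n i))) * real (card Om)"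
      unfolding sum_distrib_right by (rule sum.cong) (simp_all add: qeq T_def mult_ac)
    also have "\<dots> \<le> real (card Om)" using tl(4) Ompos by simp
    finally show False by simp
  qed
  have chV: "choosable V cmp_edge (card V)" by (rule choosable_card[OF finV]) (simp add: cmp_edge_def)
  show ?thesis
  proof (rule ccontr)
    assume "\<not> ?thesis"
    then have le: "(LEAST k. choosable V cmp_edge k) \<le> r" by (simp add: V_def choice_number_def)
    have "choosable V cmp_edge (LEAST k. choosable V cmp_edge k)" using chV by (rule LeastI)
    then have "choosable V cmp_edge r" using le choosable_mono by blast
    with notch show False by simp
  qed
qed

end
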